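(* Let $D$ be a division ring, $n\ge 1$, $1\le k\le n$, and let $A=(a_{ij})\in\mathbb{M}_n(D)$ be a matrix all of whose rows other than the $k$-th row are zero. Then $A$ is a sum of two nilpotent matrices in $\mathbb{M}_n(D)$ if and only if $a_{kk}=0$.
   Context: $\mathbb{M}_n(D)$ denotes the ring of $n\times n$ matrices over the division ring $D$. *)

theory Defs
  imports "HOL-Analysis.Analysis"
begin

text \<open>Matrix powers with respect to the matrix product (note: the ring structure
  on vec types is componentwise, so we cannot use the generic power).\<close>
fun mat_pow :: "('a::semiring_1)^'n^'n \<Rightarrow> nat \<Rightarrow> 'a^'n^'n" where
  "mat_pow A 0 = mat 1"
| "mat_pow A (Suc m) = A ** mat_pow A m"

definition nilpotent_mat :: "('a::semiring_1)^'n^'n \<Rightarrow> bool" where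
  "nilpotent_mat A \<longleftrightarrow> (\<exists>m. mat_pow A m = 0)"

end

theory Submission
  imports Defs
begin

lemma mat_pow_add: "mat_pow X (a + b) = mat_pow X a ** mat_pow X b"
  by (induction a) (simp_all add: matrix_mul_assoc)

lemma mat_pow_Suc_right: "mat_pow X (Suc n) = mat_pow X n ** X"
  using mat_pow_add[of X n 1] by simp

lemma mat_pow_zero_ge:
  assumes "mat_pow X m = 0" "m \<le> n"
  shows "mat_pow X n = 0"
proof -
  have "mat_pow X n = mat_pow X (n - m) ** mat_pow X m"
    using mat_pow_add[of X "n - m" m] assms(2) by simp
  then show ?thesis using assms(1) by simp
qed

lemma vm_sum:
  fixes M :: "('a::semiring_1)^'n^'m"
  shows "(\<Sum>i\<in>I. f i) v* M = (\<Sum>i\<in>I. f i v* M)"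
proof (cases "finite I")
  case True
  then show ?thesis
    by (induction I rule: finite_induct) (simp_all add: vector_matrix_left_distrib)
next
  case False then show ?thesis by simp
qed

lemma vm_smult:
  fixes M :: "('a::semiring_1)^'n^'m"
  shows "(c *s x) v* M = c *s (x v* M)"
  by (simp add: vector_matrix_mult_def vec_eq_iff sum_distrib_left mult.assoc)

lemma vm_rowk:
  fixes A :: "('a::semiring_1)^'n^'n"
  assumes "\<forall>i. i \<noteq> k \<longrightarrow> A $ i = 0"
  shows "x v* A = (x $ k) *s (A $ k)"
proof -
  have "(\<Sum>i\<in>UNIV. x $ i * A $ i $ j) = x $ k * A $ k $ j" for j
  proof -
    have "(\<Sum>i\<in>UNIV. x $ i * A $ i $ j) = x $ k * A $ k $ j + (\<Sum>i\<in>UNIV-{k}. x $ i * A $ i $ j)"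
      by (simp add: sum.remove)
    also have "(\<Sum>i\<in>UNIV-{k}. x $ i * A $ i $ j) = 0"
      using assms by (intro sum.neutral) auto
    finally show ?thesis by simp
  qed
  then show ?thesis by (simp add: vector_matrix_mult_def vec_eq_iff)
qed

lemma matrix_neg_mult: "(-X) ** (Y::('a::ring_1)^'n^'n) = -(X ** Y)"
  by (simp add: matrix_matrix_mult_def vec_eq_iff sum_negf)

lemma matrix_mult_neg: "X ** (-Y::('a::ring_1)^'n^'n) = -(X ** Y)"
  by (simp add: matrix_matrix_mult_def vec_eq_iff sum_negf)

lemma mat_pow_neg: "mat_pow (-X) n = mat_pow (X::('a::ring_1)^'n^'n) n \<or> mat_pow (-X) n = - mat_pow X n"
proof (induction n)
  case (Suc n) then show ?case
    by (auto simp: matrix_neg_mult matrix_mult_neg)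
qed simp

lemma mat_pow_neg_zero: "mat_pow (X::('a::ring_1)^'n^'n) m = 0 \<Longrightarrow> mat_pow (-X) m = 0"
  using mat_pow_neg[of X m] by auto

theorem lemma3p7:
  fixes A :: "('a::division_ring)^'n^'n" and k :: 'n
  assumes "\<forall>i. i \<noteq> k \<longrightarrow> A $ i = 0"
  shows "(\<exists>B C. nilpotent_mat B \<and> nilpotent_mat C \<and> A = B + C) \<longleftrightarrow> A $ k $ k = 0"
proof
  assume "\<exists>B C. nilpotent_mat B \<and> nilpotent_mat C \<and> A = B + C"
  then obtain B C m1 m2 where B: "mat_pow B m1 = 0" and C: "mat_pow C m2 = 0" and ABC: "A = B + C"
    unfolding nilpotent_mat_def by blast
  define r where "r = A $ k"
  define P where "P j = mat_pow (-B) j" for j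
  define x where "x n = r v* mat_pow C n" for n
  define d where "d n = x n $ k" for n
  define c where "c j = (r v* P j) $ k" for j
  have CA: "C = A + (-B)" using ABC by simp
  have PB: "P j ** (-B) = P (Suc j)" for j unfolding P_def by (rule mat_pow_Suc_right[symmetric])
  have xrec: "x (Suc n) = d n *s r + x n v* (-B)" for n
  proof -
    have "x (Suc n) = x n v* C"
      unfolding x_def mat_pow_Suc_right by (simp only: vector_matrix_mul_assoc)
    also have "\<dots> = x n v* A + x n v* (-B)" unfolding CA by (rule vector_matrix_mult_add_rdistrib)
    also have "x n v* A = d n *s r" using vm_rowk[OF assms] unfolding d_def r_def by simp
    finally show ?thesis .
  qed
  have closed: "x n = (\<Sum>i<n. d i *s (r v* P (n - 1 - i))) + r v* P n" for n
  proof (induction n)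
    case 0
    then show ?case unfolding x_def P_def by simp
  next
    case (Suc n)
    have "x (Suc n) = d n *s r + x n v* (-B)" by (rule xrec)
    also have "x n v* (-B) = (\<Sum>i<n. d i *s (r v* P (n - 1 - i) v* (-B))) + r v* P n v* (-B)"
      unfolding Suc by (simp add: vector_matrix_left_distrib vm_sum vm_smult)
    also have "\<dots> = (\<Sum>i<n. d i *s (r v* P (Suc n - 1 - i))) + r v* P (Suc n)"
    proof -
      have "(\<Sum>i<n. d i *s (r v* P (n - 1 - i) v* (-B))) = (\<Sum>i<n. d i *s (r v* P (Suc n - 1 - i)))"
      proof (rule sum.cong)
        fix i assume "i \<in> {..<n}"
        then have "Suc (n - 1 - i) = Suc n - 1 - i" by auto
        then show "d i *s (r v* P (n - 1 - i) v* (-B)) = d i *s (r v* P (Suc n - 1 - i))"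
          by (metis PB vector_matrix_mul_assoc)
      qed simp
      moreover have "r v* P n v* (-B) = r v* P (Suc n)" by (metis PB vector_matrix_mul_assoc)
      ultimately show ?thesis by simp
    qed
    finally show ?case
      by (simp add: P_def add.commute add.left_commute)
  qed
  have rec: "d n = (\<Sum>i<n. d i * c (n - 1 - i)) + c n" for n
    using arg_cong[OF closed[of n], of "\<lambda>v. v $ k"] unfolding d_def c_def
    by (simp add: sum_component)
  have c0: "c 0 = A $ k $ k" unfolding c_def P_def r_def by simp
  have cz: "c j = 0" if "j \<ge> m1" for j
  proof -
    have "mat_pow (-B) j = 0"
      using mat_pow_neg_zero[OF B] mat_pow_zero_ge that by blast
    then show ?thesis unfolding c_def P_def by simp
  qed
  have dz: "d j = 0" if "j \<ge> m2" for j
    unfolding d_def x_def using mat_pow_zero_ge[OF C that] by simp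
  show "A $ k $ k = 0"
  proof (rule ccontr)
    assume ne: "A $ k $ k \<noteq> 0"
    define S where "S = {j. c j \<noteq> 0}"
    define T where "T = {j. d j \<noteq> 0}"
    have fS: "finite S" unfolding S_def using cz
      by (metis (mono_tags, lifting) finite_lessThan finite_subset lessThan_iff mem_Collect_eq not_le subsetI)
    have fT: "finite T" unfolding T_def using dz
      by (metis (mono_tags, lifting) finite_lessThan finite_subset lessThan_iff mem_Collect_eq not_le subsetI)
    have "0 \<in> S" unfolding S_def using c0 ne by simp
    have d0: "d 0 = c 0" using rec[of 0] by simp
    have "0 \<in> T" unfolding T_def using d0 c0 ne by simp
    define p where "p = Max S"
    define q where "q = Max T"
    have cp: "c p \<noteq> 0" unfolding p_def using Max_in[OF fS] \<open>0 \<in> S\<close> S_def by auto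
    have dq: "d q \<noteq> 0" unfolding q_def using Max_in[OF fT] \<open>0 \<in> T\<close> T_def by auto
    have cgt: "c j = 0" if "j > p" for j
      using Max_ge[OF fS, of j] that unfolding p_def S_def by force
    have dgt: "d j = 0" if "j > q" for j
      using Max_ge[OF fT, of j] that unfolding q_def T_def by force
    define n where "n = p + q + 1"
    have "d n = (\<Sum>i<n. d i * c (n - 1 - i)) + c n" by (rule rec)
    moreover have "d n = 0" using dgt unfolding n_def by simp
    moreover have "c n = 0" using cgt unfolding n_def by simp
    moreover have "(\<Sum>i<n. d i * c (n - 1 - i)) = d q * c p"
    proof -
      have "q \<in> {..<n}" unfolding n_def by simp
      then have "(\<Sum>i<n. d i * c (n - 1 - i)) = d q * c (n - 1 - q) + (\<Sum>i\<in>{..<n}-{q}. d i * c (n - 1 - i))"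
        by (simp add: sum.remove)
      also have "(\<Sum>i\<in>{..<n}-{q}. d i * c (n - 1 - i)) = 0"
      proof (rule sum.neutral, rule ballI)
        fix i assume i: "i \<in> {..<n}-{q}"
        show "d i * c (n - 1 - i) = 0"
        proof (cases "i > q")
          case True then show ?thesis using dgt by simp
        next
          case False
          then have "n - 1 - i > p" using i unfolding n_def by auto
          then show ?thesis using cgt by simp
        qed
      qed
      finally show ?thesis unfolding n_def by simp
    qed
    ultimately have "d q * c p = 0" by simp
    then show False using cp dq by simp
  qed
next
  assume kk: "A $ k $ k = 0"
  have AA: "A ** A = 0"
  proof -
    have "(A ** A) $ i $ j = 0" for i j
    proof -
      have "(A ** A) $ i = A $ i v* A" by (simp add: matrix_matrix_mult_def vector_matrix_mult_def)
      also have "\<dots> = (A $ i $ k) *s (A $ k)" by (rule vm_rowk[OF assms])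
      finally show ?thesis using assms kk by (cases "i = k") auto
    qed
    then show ?thesis by (simp add: vec_eq_iff)
  qed
  have "nilpotent_mat A" unfolding nilpotent_mat_def
    by (rule exI[of _ 2]) (simp add: numeral_2_eq_2 AA)
  moreover have "nilpotent_mat (0::('a::division_ring)^'n^'n)" unfolding nilpotent_mat_def
    by (rule exI[of _ 1]) simp
  ultimately show "\<exists>B C. nilpotent_mat B \<and> nilpotent_mat C \<and> A = B + C" by force
qed

end
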